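(* Let $T>0$, $\gamma>0$, $k\in\mathbb{R}$, and let $W$ be a standard one-dimensional Brownian motion with $W_0=0$ whose augmented natural filtration is $\{\mathcal{F}_t\}$. Let $\mathcal{D}_t=\{X\in L^0(\Omega,\mathcal{F}_t,P):E[\exp\{a|X|\}]<\infty\text{ for all }a>0\}$ and $\Pi_t(X)=-\frac1\gamma\log E[\exp\{-\gamma X\}\mid\mathcal{F}_t]$ for $X\in\mathcal{D}_T$, so that for each $X\in\mathcal{D}_T$ there is a progressively measurable $Z(X)$ with $E\int_0^T|Z_t(X)|^2dt<\infty$ and $X=\Pi_t(X)+\int_t^T\frac\gamma2Z_s(X)^2ds-\int_t^TZ_s(X)dW_s$ for all $t$. Let $S=(W_T-k)_+$ and, for $y\in\mathbb{R}$, $Z^y=Z(-yS)$. Then for every $t\in[0,T)$, $$\lim_{y\to\infty}Z^y_t=\infty,\qquad \lim_{y\to-\infty}Z^y_t=-\frac{\phi\big(\frac{k-W_t}{\sqrt{T-t}}\big)}{\gamma\sqrt{T-t}\,\Phi\big(\frac{k-W_t}{\sqrt{T-t}}\big)},$$ where $\phi$ and $\Phi$ are the standard normal density and distribution function.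
   Context: This is the Markov setting with factor $F=W$ (drift $0$, volatility $1$), driver $g(z,t)=\gamma z^2/2$, Market inventory $H_{\mathrm M}=0$ and security payoff $S=s(W_T)$ with $s(x)=(x-k)_+$; $Z^y_t=-\partial_wp(W_t,t,y)$ with $p(w,t,y)=-\frac1\gamma\log E[\exp(y\gamma(W_T-k)_+)\mid W_t=w]$. *)

theory Defs
  imports "HOL-Probability.Probability"
begin

definition std_normal_cdf :: "real \<Rightarrow> real" where
  "std_normal_cdf x = (LINT u:{..x}|lborel. std_normal_density u)"

text \<open>Markov representation: p(w,t,y) = -(1/gamma) log E[exp(y gamma (W_T - k)_+) | W_t = w],
  where conditionally on W_t = w, W_T = w + sqrt(T-t) N with N standard normal.\<close>
definition price_fn :: "real \<Rightarrow> real \<Rightarrow> real \<Rightarrow> real \<Rightarrow> real \<Rightarrow> real \<Rightarrow> real" where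
  "price_fn T \<gamma> k w t y =
     - (1 / \<gamma>) * ln (LINT x|lborel. std_normal_density x *
          exp (y * \<gamma> * max 0 (w + sqrt (T - t) * x - k)))"

text \<open>Z^y_t evaluated on the event W_t = w: Z = - d/dw p(w,t,y).\<close>
definition Z_fn :: "real \<Rightarrow> real \<Rightarrow> real \<Rightarrow> real \<Rightarrow> real \<Rightarrow> real \<Rightarrow> real" where
  "Z_fn T \<gamma> k w t y = - deriv (\<lambda>v. price_fn T \<gamma> k v t y) w"

end

theory Submission
  imports Defs "HOL-Real_Asymp.Real_Asymp"
begin


abbreviation "\<phi> \<equiv> std_normal_density"
abbreviation "\<Phi> \<equiv> std_normal_cdf"

lemma phi_si: "A \<in> sets borel \<Longrightarrow> set_integrable lborel A \<phi>"
  unfolding set_integrable_def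
  by (rule integrable_mult_indicator) auto

lemma Phi_split: assumes "a \<le> u" shows "\<Phi> u = \<Phi> a + (LBINT v=a..u. \<phi> v)"
proof -
  have "{..u} = {..a} \<union> {a<..u}" using assms by auto
  then have "\<Phi> u = (LINT v:{..a} \<union> {a<..u}|lborel. \<phi> v)" by (simp add: std_normal_cdf_def)
  also have "\<dots> = \<Phi> a + (LINT v:{a<..u}|lborel. \<phi> v)"
    by (subst set_integral_Un) (auto simp: phi_si std_normal_cdf_def)
  finally show ?thesis using assms by (simp add: interval_integral_Ioc)
qed

lemma phi_cont: "continuous_on A \<phi>"
  unfolding std_normal_density_def by (intro continuous_intros) auto

lemma Phi_deriv: "(\<Phi> has_real_derivative \<phi> x) (at x)"
proof -
  have "((\<lambda>u. LBINT v=(x-1)..u. \<phi> v) has_vector_derivative \<phi> x) (at x within {x-1..x+1})"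
    by (rule interval_integral_FTC2) (auto intro: phi_cont)
  then have "((\<lambda>u. LBINT v=(x-1)..u. \<phi> v) has_real_derivative \<phi> x) (at x)"
    by (simp add: at_within_Icc_at has_real_derivative_iff_has_vector_derivative)
  then have "((\<lambda>u. \<Phi> (x-1) + (LBINT v=(x-1)..u. \<phi> v)) has_real_derivative \<phi> x) (at x)"
    by (auto intro!: derivative_eq_intros)
  then show ?thesis
  proof (rule has_field_derivative_transform_within_open[where S="{x-1<..}"])
    fix u assume "u \<in> {x-1<..}"
    then show "\<Phi> (x-1) + (LBINT v=(x-1)..u. \<phi> v) = \<Phi> u" using Phi_split[of "x-1" u] by simp
  qed auto
qed

lemma Phi_cdf: "\<Phi> x = cdf (density lborel \<phi>) x"
proof -
  have "emeasure (density lborel \<phi>) {..x} = (\<integral>\<^sup>+ v. ennreal (indicator {..x} v * \<phi> v) \<partial>lborel)"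
    by (subst emeasure_density) (auto intro!: nn_integral_cong split: split_indicator)
  also have "\<dots> = ennreal (\<Phi> x)"
    unfolding std_normal_cdf_def set_lebesgue_integral_def
    using phi_si[of "{..x}"] unfolding set_integrable_def
    by (subst nn_integral_eq_integral) auto
  finally show ?thesis
    unfolding cdf_def2 measure_def std_normal_cdf_def set_lebesgue_integral_def
    by (simp add: integral_nonneg_AE)
qed

lemma Phi_rd: "real_distribution (density lborel \<phi>)"
  unfolding real_distribution_def real_distribution_axioms_def
  by (auto simp: prob_space_normal_density)

lemma Phi_top: "(\<Phi> \<longlongrightarrow> 1) at_top"
  using real_distribution.cdf_lim_at_top_prob[OF Phi_rd] by (simp add: Phi_cdf[abs_def])

lemma Phi_nonneg: "0 \<le> \<Phi> x"
  by (simp add: Phi_cdf cdf_def2)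

lemma Phi_le1: "\<Phi> x \<le> 1"
  using real_distribution.cdf_bounded_prob[OF Phi_rd] by (simp add: Phi_cdf)

lemma Phi_strict: "a < b \<Longrightarrow> \<Phi> a < \<Phi> b"
  by (rule DERIV_pos_imp_increasing[where f=\<Phi>]) (metis Phi_deriv normal_density_pos zero_less_one)+

lemma Phi_pos: "0 < \<Phi> x"
  using Phi_strict[of "x-1" x] Phi_nonneg[of "x-1"] by simp

lemma Phi_lt1: "\<Phi> x < 1"
  using Phi_strict[of x "x+1"] Phi_le1[of "x+1"] by simp

lemma Q_eq: "(LINT v:{z<..}|lborel. \<phi> v) = 1 - \<Phi> z"
proof -
  have "(LINT v:{..z} \<union> {z<..}|lborel. \<phi> v) = \<Phi> z + (LINT v:{z<..}|lborel. \<phi> v)"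
    by (subst set_integral_Un) (auto simp: phi_si std_normal_cdf_def)
  moreover have "{..z} \<union> {z<..} = (UNIV::real set)" by auto
  ultimately show ?thesis by (simp add: set_lebesgue_integral_def)
qed

lemma Q_eq': "(LINT v|lborel. indicator {z<..} v * \<phi> v) = 1 - \<Phi> z"
  using Q_eq[of z] by (simp add: set_lebesgue_integral_def)

lemma ind_phi_int: "integrable lborel (\<lambda>v. indicator A v * \<phi> v)" if "A \<in> sets borel"
  using phi_si[OF that] by (simp add: set_integrable_def)

lemma shift_ind: fixes a s x :: real shows "indicator {a - s<..} (- s + 1 * x) = (indicator {a<..} x :: real)"
  by (auto split: split_indicator)

lemma shift_int: "(LINT x|lborel. indicator {a<..} x * \<phi> (x - s)) = 1 - \<Phi> (a - s)"
proof -
  have "(LINT u|lborel. indicator {a-s<..} u * \<phi> u) = (LINT x|lborel. indicator {a-s<..} (-s + 1*x) * \<phi> (-s + 1*x))"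
    using lborel_integral_real_affine[of 1 "\<lambda>u. indicator {a-s<..} u * \<phi> u" "-s"] by simp
  also have "\<dots> = (LINT x|lborel. indicator {a<..} x * \<phi> (x - s))"
    by (simp only: shift_ind) simp
  finally show ?thesis using Q_eq'[of "a - s"] by simp
qed

lemma shift_integrable: "integrable lborel (\<lambda>x. indicator {a<..} x * \<phi> (x - s))"
proof -
  have "integrable lborel (\<lambda>x. indicator {a-s<..} (-s + 1*x) * \<phi> (-s + 1*x))"
    by (rule lborel_integrable_real_affine[where f="\<lambda>u. indicator {a-s<..} u * \<phi> u"]) (auto intro: ind_phi_int)
  then show ?thesis by (simp only: shift_ind) simp
qed

lemma phi_exp: "\<phi> x * exp (c * (w + s * x - k)) = exp (c * (w - k) + c^2 * s^2 / 2) * \<phi> (x - c * s)"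
proof -
  have "- x\<^sup>2 / 2 + c * (w + s * x - k) = c * (w - k) + c^2 * s^2 / 2 + (- (x - c * s)\<^sup>2 / 2)"
    by (simp add: power2_eq_square field_simps)
  then have "exp (- x\<^sup>2 / 2) * exp (c * (w + s * x - k)) = exp (c * (w - k) + c^2 * s^2 / 2) * exp (- (x - c * s)\<^sup>2 / 2)"
    by (simp add: exp_add[symmetric])
  then show ?thesis unfolding std_normal_density_def by simp
qed

definition Fcl :: "real \<Rightarrow> real \<Rightarrow> real \<Rightarrow> real \<Rightarrow> real" where
  "Fcl s c k w = \<Phi> ((k - w) / s) + exp (c * (w - k) + c^2 * s^2 / 2) * (1 - \<Phi> ((k - w) / s - c * s))"

lemma closed_form:
  assumes s: "s > 0"
  shows "(LINT x|lborel. \<phi> x * exp (c * max 0 (w + s * x - k))) = Fcl s c k w"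
proof -
  define d where "d = (k - w) / s"
  define E where "E = exp (c * (w - k) + c^2 * s^2 / 2)"
  have pt: "\<phi> x * exp (c * max 0 (w + s * x - k)) =
      indicator {..d} x * \<phi> x + E * (indicator {d<..} x * \<phi> (x - c * s))" for x
  proof (cases "x \<le> d")
    case True
    then have "s * x \<le> k - w" using s by (simp add: d_def pos_le_divide_eq mult.commute)
    then show ?thesis using True by (simp add: max_def)
  next
    case False
    then have "s * x > k - w" using s by (simp add: d_def not_le pos_divide_less_eq mult.commute)
    then show ?thesis using False phi_exp[of x c w s k] by (simp add: max_def E_def)
  qed
  have "(LINT x|lborel. \<phi> x * exp (c * max 0 (w + s * x - k))) =
     (LINT x|lborel. indicator {..d} x * \<phi> x + E * (indicator {d<..} x * \<phi> (x - c * s)))"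
    by (simp only: pt)
  also have "\<dots> = (LINT x|lborel. indicator {..d} x * \<phi> x) + (LINT x|lborel. E * (indicator {d<..} x * \<phi> (x - c * s)))"
    by (rule Bochner_Integration.integral_add) (auto intro: ind_phi_int shift_integrable)
  also have "\<dots> = \<Phi> d + E * (1 - \<Phi> (d - c * s))"
    by (simp add: shift_int std_normal_cdf_def set_lebesgue_integral_def)
  finally show ?thesis by (simp add: Fcl_def d_def E_def)
qed

lemma Phi_chain[derivative_intros]:
  "(f has_real_derivative f') (at x within S) \<Longrightarrow> ((\<lambda>x. \<Phi> (f x)) has_real_derivative \<phi> (f x) * f') (at x within S)"
  by (rule DERIV_chain2[OF Phi_deriv])

lemma Fcl_pos: "s > 0 \<Longrightarrow> Fcl s c k w > 0"
  unfolding Fcl_def using Phi_pos[of "(k - w) / s"] Phi_lt1[of "(k - w) / s - c * s"]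
  by (intro add_pos_nonneg) auto

lemma Fcl_deriv:
  assumes s: "s > 0"
  shows "(Fcl s c k has_real_derivative
     c * exp (c * (w - k) + c^2 * s^2 / 2) * (1 - \<Phi> ((k - w) / s - c * s))) (at w)"
proof -
  define d where "d = (k - w) / s"
  define E where "E = exp (c * (w - k) + c^2 * s^2 / 2)"
  have sd: "w + s * d - k = 0" using s by (simp add: d_def)
  have key: "E * \<phi> (d - c * s) = \<phi> d"
    using phi_exp[of d c w s k] sd by (simp add: E_def)
  have key': "\<phi> ((k - w) / s) = exp (c * (w - k) + c^2 * s^2 / 2) * \<phi> ((k - w) / s - c * s)"
    using key by (simp add: d_def E_def)
  show ?thesis
    unfolding Fcl_def[abs_def] using s
    apply (intro derivative_eq_intros refl)
    by (auto simp: key')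

qed

definition Acl :: "real \<Rightarrow> real \<Rightarrow> real \<Rightarrow> real \<Rightarrow> real" where
  "Acl s c k w = exp (c * (w - k) + c^2 * s^2 / 2) * (1 - \<Phi> ((k - w) / s - c * s))"

lemma Acl_pos: "Acl s c k w > 0"
  unfolding Acl_def using Phi_lt1[of "(k - w) / s - c * s"] by simp

lemma Z_formula:
  assumes "\<gamma> > 0" "t < T"
  shows "Z_fn T \<gamma> k w t y = y * Acl (sqrt (T - t)) (y * \<gamma>) k w / (\<Phi> ((k - w) / sqrt (T - t)) + Acl (sqrt (T - t)) (y * \<gamma>) k w)"
proof -
  define s where "s = sqrt (T - t)"
  have s: "s > 0" using assms by (simp add: s_def)
  have pf: "(\<lambda>v. price_fn T \<gamma> k v t y) = (\<lambda>v. - (1 / \<gamma>) * ln (Fcl s (y * \<gamma>) k v))"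
    using closed_form[OF s] by (simp add: price_fn_def s_def)
  have d1: "((\<lambda>v. ln (Fcl s (y * \<gamma>) k v)) has_real_derivative
      (1 / Fcl s (y * \<gamma>) k w) * ((y * \<gamma>) * Acl s (y * \<gamma>) k w)) (at w)"
    using DERIV_chain2[OF DERIV_ln_divide[OF Fcl_pos[OF s]] Fcl_deriv[OF s, of "y * \<gamma>" k w]]
    by (simp add: Acl_def mult.assoc)
  have "Z_fn T \<gamma> k w t y = (1 / \<gamma>) * ((1 / Fcl s (y * \<gamma>) k w) * ((y * \<gamma>) * Acl s (y * \<gamma>) k w))"
    unfolding Z_fn_def pf by (subst DERIV_imp_deriv[OF DERIV_cmult[OF d1]]) simp
  also have "\<dots> = y * Acl s (y * \<gamma>) k w / (\<Phi> ((k - w) / s) + Acl s (y * \<gamma>) k w)"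
    using assms by (simp add: Fcl_def Acl_def)
  finally show ?thesis by (simp add: s_def)
qed



lemma phi_deriv: "(\<phi> has_real_derivative (- x * \<phi> x)) (at x)"
proof -
  have "((\<lambda>x. exp (- x\<^sup>2 / 2)) has_real_derivative exp (- x\<^sup>2 / 2) * (- x)) (at x)"
    by (auto intro!: derivative_eq_intros simp: power2_eq_square)
  from DERIV_cmult[OF this, of "1 / sqrt (2 * pi)"] show ?thesis
    unfolding std_normal_density_def[abs_def] by (simp add: mult_ac)
qed

lemma decr_lim_nonneg:
  fixes g g' :: "real \<Rightarrow> real"
  assumes "\<And>x. x > a \<Longrightarrow> (g has_real_derivative g' x) (at x)" "\<And>x. x > a \<Longrightarrow> g' x \<le> 0"
    "(g \<longlongrightarrow> 0) at_top" "z > a"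
  shows "g z \<ge> 0"
proof -
  have "eventually (\<lambda>x. g x \<le> g z) at_top"
    using eventually_ge_at_top[of z]
  proof eventually_elim
    case (elim x)
    show ?case
    proof (rule DERIV_nonpos_imp_nonincreasing[OF elim])
      fix t assume "z \<le> t" "t \<le> x"
      then have "t > a" using assms(4) by simp
      then show "\<exists>y. (g has_real_derivative y) (at t) \<and> y \<le> 0" using assms(1,2) by blast
    qed

  qed
  from tendsto_upperbound[OF assms(3) this] show ?thesis by simp
qed

lemma phi_lim1: "((\<lambda>z. \<phi> z / z) \<longlongrightarrow> 0) at_top"
  unfolding std_normal_density_def by real_asymp

lemma phi_lim2: "((\<lambda>z. \<phi> z * (1 / z - 1 / z ^ 3)) \<longlongrightarrow> 0) at_top"
  unfolding std_normal_density_def by real_asymp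

lemma Q_lim: "((\<lambda>z. 1 - \<Phi> z) \<longlongrightarrow> 0) at_top"
  using tendsto_diff[OF tendsto_const[of 1] Phi_top] by simp

lemma mills_upper: "z > 0 \<Longrightarrow> 1 - \<Phi> z \<le> \<phi> z / z"
proof -
  assume z: "z > 0"
  have "\<phi> z / z - (1 - \<Phi> z) \<ge> 0"
  proof (rule decr_lim_nonneg[where a=0 and g' = "\<lambda>x. - \<phi> x / x^2" and g="\<lambda>z. \<phi> z / z - (1 - \<Phi> z)"])
    fix x :: real assume x: "x > 0"
    show "((\<lambda>z. \<phi> z / z - (1 - \<Phi> z)) has_real_derivative - \<phi> x / x^2) (at x)"
      using x by (auto intro!: derivative_eq_intros phi_deriv Phi_deriv simp: field_simps power2_eq_square)
    show "- \<phi> x / x^2 \<le> 0" by simp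
  next
    show "((\<lambda>z. \<phi> z / z - (1 - \<Phi> z)) \<longlongrightarrow> 0) at_top"
      using tendsto_diff[OF phi_lim1 Q_lim] by simp
  qed (use z in auto)
  then show ?thesis by simp
qed

lemma mills_lower: "z > 0 \<Longrightarrow> \<phi> z * (1 / z - 1 / z ^ 3) \<le> 1 - \<Phi> z"
proof -
  assume z: "z > 0"
  have "(1 - \<Phi> z) - \<phi> z * (1 / z - 1 / z ^ 3) \<ge> 0"
  proof (rule decr_lim_nonneg[where a=0 and g' = "\<lambda>x. - 3 * \<phi> x / x^4" and g="\<lambda>z. (1 - \<Phi> z) - \<phi> z * (1 / z - 1 / z ^ 3)"])
    fix x :: real assume x: "x > 0"
    show "((\<lambda>z. (1 - \<Phi> z) - \<phi> z * (1 / z - 1 / z ^ 3)) has_real_derivative - 3 * \<phi> x / x^4) (at x)"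
      using x by (auto intro!: derivative_eq_intros phi_deriv Phi_deriv simp: field_simps power2_eq_square eval_nat_numeral)
    show "- 3 * \<phi> x / x^4 \<le> 0" by simp
  next
    show "((\<lambda>z. (1 - \<Phi> z) - \<phi> z * (1 / z - 1 / z ^ 3)) \<longlongrightarrow> 0) at_top"
      using tendsto_diff[OF Q_lim phi_lim2] by simp
  qed (use z in auto)
  then show ?thesis by simp
qed



lemma phi_ne0[simp]: "\<phi> x \<noteq> 0"
  using normal_density_pos[of 1 0 x] by simp

lemma R_bounds: "z > 0 \<Longrightarrow> 1 - 1 / z^2 \<le> z * (1 - \<Phi> z) / \<phi> z \<and> z * (1 - \<Phi> z) / \<phi> z \<le> 1"
proof -
  assume z: "z > 0"
  have p: "\<phi> z > 0" by (simp add: normal_density_pos)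
  have u: "1 - \<Phi> z \<le> \<phi> z / z" by (rule mills_upper[OF z])
  have l: "\<phi> z * (1 / z - 1 / z ^ 3) \<le> 1 - \<Phi> z" by (rule mills_lower[OF z])
  have "z * (1 - \<Phi> z) \<le> \<phi> z" using u z by (simp add: field_simps)
  moreover have "\<phi> z * (1 - 1 / z^2) \<le> z * (1 - \<Phi> z)"
  proof -
    have "\<phi> z * (1 - 1 / z^2) = z * (\<phi> z * (1 / z - 1 / z ^ 3))" using z
      by (simp add: field_simps power2_eq_square power3_eq_cube)
    also have "\<dots> \<le> z * (1 - \<Phi> z)" using l z by (intro mult_left_mono) auto
    finally show ?thesis .
  qed
  ultimately show ?thesis using p by (simp add: field_simps)
qed

lemma R_lim: "((\<lambda>z. z * (1 - \<Phi> z) / \<phi> z) \<longlongrightarrow> 1) at_top"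
proof (rule tendsto_sandwich[where f="\<lambda>z. 1 - 1 / z^2" and h="\<lambda>z. 1"])
  show "eventually (\<lambda>z. 1 - 1 / z^2 \<le> z * (1 - \<Phi> z) / \<phi> z) at_top"
    using eventually_gt_at_top[of 0] by eventually_elim (use R_bounds in blast)
  show "eventually (\<lambda>z. z * (1 - \<Phi> z) / \<phi> z \<le> 1) at_top"
    using eventually_gt_at_top[of 0] by eventually_elim (use R_bounds in blast)
  have "((\<lambda>z::real. 1 / z^2) \<longlongrightarrow> 0) at_top" by real_asymp
  from tendsto_diff[OF tendsto_const[of 1] this] show "((\<lambda>z::real. 1 - 1 / z^2) \<longlongrightarrow> 1) at_top" by simp
qed auto

lemma M_lim: "((\<lambda>z. (d - z) * (1 - \<Phi> z) / \<phi> z) \<longlongrightarrow> -1) at_top"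
proof -
  have 1: "((\<lambda>z. (z * (1 - \<Phi> z) / \<phi> z) * (1 / z)) \<longlongrightarrow> 1 * 0) at_top"
    by (intro tendsto_mult R_lim) (real_asymp)
  have "((\<lambda>z. d * ((z * (1 - \<Phi> z) / \<phi> z) * (1 / z)) - z * (1 - \<Phi> z) / \<phi> z) \<longlongrightarrow> d * (1 * 0) - 1) at_top"
    by (intro tendsto_intros 1 R_lim)
  then have "((\<lambda>z. d * ((z * (1 - \<Phi> z) / \<phi> z) * (1 / z)) - z * (1 - \<Phi> z) / \<phi> z) \<longlongrightarrow> -1) at_top"
    by simp
  then show ?thesis
    by (rule Lim_transform_eventually)
       (use eventually_gt_at_top[of 0] in \<open>eventually_elim, simp add: field_simps\<close>)
qed



theorem proposition1:
  fixes T \<gamma> k t w :: real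
  assumes "T > 0" and "\<gamma> > 0" and "0 \<le> t" and "t < T"
  shows "filterlim (\<lambda>y. Z_fn T \<gamma> k w t y) at_top at_top \<and>
         ((\<lambda>y. Z_fn T \<gamma> k w t y) \<longlongrightarrow>
           - std_normal_density ((k - w) / sqrt (T - t))
             / (\<gamma> * sqrt (T - t) * std_normal_cdf ((k - w) / sqrt (T - t)))) at_bot"
proof -
  define s where "s = sqrt (T - t)"
  have s: "s > 0" using assms by (simp add: s_def)
  have g: "\<gamma> > 0" by fact
  define d where "d = (k - w) / s"
  define A where "A y = Acl s (y * \<gamma>) k w" for y
  have Z: "Z_fn T \<gamma> k w t y = y * A y / (\<Phi> d + A y)" for y
    using Z_formula[OF assms(2,4)] by (simp add: A_def d_def s_def)
  have Apos: "A y > 0" for y unfolding A_def by (rule Acl_pos)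
  have Pd: "\<Phi> d > 0" "\<Phi> d < 1" by (rule Phi_pos, rule Phi_lt1)
  have sd: "(k - w) / s = d" by (simp add: d_def)
  define a0 where "a0 = 1 - \<Phi> d"
  have a0: "a0 > 0" using Pd by (simp add: a0_def)
  define r where "r = a0 / (1 + a0)"
  have r: "r > 0" using a0 by (simp add: r_def)
  have top: "filterlim (\<lambda>y. Z_fn T \<gamma> k w t y) at_top at_top"
  proof (rule filterlim_at_top_mono[where f="\<lambda>y. r * y"])
    show "LIM y at_top. r * y :> at_top"
      by (rule filterlim_tendsto_pos_mult_at_top[OF tendsto_const r filterlim_ident])
    show "eventually (\<lambda>y. r * y \<le> Z_fn T \<gamma> k w t y) at_top"
      using eventually_ge_at_top[of "max 0 (2 * (k - w) / (\<gamma> * s^2))"]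
    proof eventually_elim
      case (elim y)
      define c where "c = y * \<gamma>"
      have y0: "y \<ge> 0" using elim by simp
      have c0: "c \<ge> 0" using y0 g by (simp add: c_def)
      have "2 * (k - w) / (\<gamma> * s^2) \<le> y" using elim by simp
      then have "2 * (k - w) \<le> y * (\<gamma> * s^2)" using g s by (simp add: divide_le_eq mult.commute)
      then have "k - w \<le> c * s^2 / 2" by (simp add: c_def mult.assoc)
      then have "0 \<le> c * ((w - k) + c * s^2 / 2)" using c0 by (intro mult_nonneg_nonneg) auto
      then have E1: "1 \<le> exp (c * (w - k) + c^2 * s^2 / 2)"
        by (simp add: algebra_simps power2_eq_square)
      have "\<Phi> (d - c * s) \<le> \<Phi> d"
        using Phi_strict[of "d - c * s" d] c0 s by (cases "c = 0") (auto simp: less_imp_le)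
      then have Q1: "a0 \<le> 1 - \<Phi> (d - c * s)" by (simp add: a0_def)
      have "a0 \<le> A y"
      proof -
        have "a0 \<le> 1 * (1 - \<Phi> (d - c * s))" using Q1 by simp
        also have "\<dots> \<le> exp (c * (w - k) + c^2 * s^2 / 2) * (1 - \<Phi> (d - c * s))"
          using E1 Q1 a0 by (intro mult_right_mono) auto
        finally show ?thesis by (simp add: A_def Acl_def c_def sd)
      qed
      then have "r \<le> A y / (1 + A y)"
        using a0 Apos[of y] unfolding r_def by (simp add: field_simps)
      also have "\<dots> \<le> A y / (\<Phi> d + A y)"
        using Pd Apos[of y] by (intro divide_left_mono) (auto simp: less_imp_le)
      finally have "r * y \<le> (A y / (\<Phi> d + A y)) * y" using y0 by (intro mult_right_mono)
      then show ?case by (simp add: Z mult.commute)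
    qed
  qed
  define z where "z y = d - y * \<gamma> * s" for y
  have key: "y * A y = \<phi> d / (\<gamma> * s) * ((d - z y) * (1 - \<Phi> (z y)) / \<phi> (z y))" for y
  proof -
    define c where "c = y * \<gamma>"
    have "w + s * d - k = 0" using s by (simp add: d_def)
    then have E: "exp (c * (w - k) + c^2 * s^2 / 2) * \<phi> (d - c * s) = \<phi> d"
      using phi_exp[of d c w s k] by simp
    have zc: "z y = d - c * s" by (simp add: z_def c_def)
    show ?thesis
      unfolding A_def Acl_def sd zc c_def[symmetric] E[symmetric]
      using g s by (simp add: field_simps c_def)
  qed
  have zlim: "filterlim z at_top at_bot"
  proof -
    have "LIM y at_bot. d + (\<gamma> * s) * (- y) :> at_top"
      by (rule filterlim_tendsto_add_at_top[OF tendsto_const]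
          filterlim_tendsto_pos_mult_at_top[OF tendsto_const _ filterlim_uminus_at_top_at_bot])+
         (use g s in simp)
    then show ?thesis unfolding z_def by (simp add: algebra_simps)
  qed
  define L0 where "L0 = \<phi> d / (\<gamma> * s) * (-1)"
  have yA: "((\<lambda>y. y * A y) \<longlongrightarrow> L0) at_bot"
    unfolding key L0_def
    by (intro tendsto_mult tendsto_const filterlim_compose[OF M_lim zlim])
  have "((\<lambda>y. (y * A y) * (1 / y)) \<longlongrightarrow> L0 * 0) at_bot"
    by (intro tendsto_mult yA) real_asymp
  then have "((\<lambda>y. (y * A y) * (1 / y)) \<longlongrightarrow> 0) at_bot" by simp
  then have Alim: "(A \<longlongrightarrow> 0) at_bot"
    by (rule Lim_transform_eventually) (use eventually_gt_at_bot[of "0::real"] in \<open>eventually_elim, simp\<close>)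
  have "((\<lambda>y. y * A y / (\<Phi> d + A y)) \<longlongrightarrow> L0 / (\<Phi> d + 0)) at_bot"
    by (intro tendsto_intros yA Alim) (use Pd in simp)
  then have bot: "((\<lambda>y. Z_fn T \<gamma> k w t y) \<longlongrightarrow> L0 / \<Phi> d) at_bot" by (simp add: Z)
  have "L0 / \<Phi> d = - std_normal_density ((k - w) / sqrt (T - t))
             / (\<gamma> * sqrt (T - t) * std_normal_cdf ((k - w) / sqrt (T - t)))"
    by (simp add: L0_def d_def s_def)
  with top bot show ?thesis by simp
qed


end
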